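(* Let $\rho$ be a left-c.e. semi-measure and let $\Phi$ be a Turing functional with $\lambda_\Phi=\rho$. Then for every $X\in\mathsf{W2R}\cap\mathrm{dom}(\Phi)$, $\Phi(X)\in\mathsf{W2R}_\rho$.
   Context: $2^{<\omega}$ is the set of finite binary strings, $\preceq$ the prefix order, $\varepsilon$ the empty string, $[\![\sigma]\!]=\{X\in2^\omega:\sigma\preceq X\}$, $[\![S]\!]=\bigcup_{\sigma\in S}[\![\sigma]\!]$; $\lambda$ is the uniform measure. $\mathsf{W2R}$ is the set of weakly 2-random sequences: $X$ such that $X\notin\bigcap_i\mathcal U_i$ for every uniformly effectively open sequence $(\mathcal U_i)$ of subsets of $2^\omega$ with $\lim_i\lambda(\mathcal U_i)=0$. A Turing functional $\Phi$ is a c.e. set of pairs $(\sigma,\tau)$ of strings such that whenever $(\sigma,\tau),(\sigma',\tau')\in\Phi$ and $\sigma\preceq\sigma'$, $\tau,\tau'$ are comparable; $\Phi^X$ is the maximal finite or infinite sequence extending every $\tau$ with $(\sigma,\tau)\in\Phi$ for some $\sigma\preceq X$; $\mathrm{dom}(\Phi)=\{X:\Phi^X\text{ infinite}\}$, $\Phi(X)=\Phi^X$ there, and $\lambda_\Phi(\sigma)=\lambda(\{X:\Phi^X\succeq\sigma\})$. A semi-measure is $\rho:2^{<\omega}\to[0,1]$ with $\rho(\varepsilon)=1$ and $\rho(\sigma)\ge\rho(\sigma0)+\rho(\sigma1)$; left-c.e. means uniformly approximable from below by computable non-decreasing rational sequences. For $E\subseteq2^{<\omega}$, $\rho(E)=\sum_{\sigma\in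 E}\rho(\sigma)$. A generalized $\rho$-Martin-Löf test is a uniformly c.e. sequence $(U_i)$ of subsets of $2^{<\omega}$ with $\lim_i\rho(U_i)=0$; $X\in\mathsf{W2R}_\rho$ iff $X\notin\bigcap_i[\![U_i]\!]$ for every such test. *)

theory Defs
  imports "HOL-Probability.Probability" "HOL-Library.Nat_Bijection" "HOL-Library.Sublist"
begin

inductive prim :: "(nat \<Rightarrow> nat) \<Rightarrow> bool" where
  prim_zero: "prim (\<lambda>_. 0)"
| prim_suc: "prim Suc"
| prim_id: "prim (\<lambda>x. x)"
| prim_fst: "prim (\<lambda>x. fst (prod_decode x))"
| prim_snd: "prim (\<lambda>x. snd (prod_decode x))"
| prim_pair: "prim f \<Longrightarrow> prim g \<Longrightarrow> prim (\<lambda>x. prod_encode (f x, g x))"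
| prim_comp: "prim f \<Longrightarrow> prim g \<Longrightarrow> prim (\<lambda>x. f (g x))"
| prim_rec: "prim f \<Longrightarrow> prim g \<Longrightarrow>
    prim (\<lambda>p. rec_nat (f (fst (prod_decode p)))
                 (\<lambda>k r. g (prod_encode (fst (prod_decode p), prod_encode (k, r))))
                 (snd (prod_decode p)))"

definition ce_nat :: "nat set \<Rightarrow> bool" where
  "ce_nat A \<longleftrightarrow> (\<exists>R. prim R \<and> A = {x. \<exists>n. R (prod_encode (x, n)) \<noteq> 0})"

type_synonym str = "bool list"      \<comment> \<open>finite binary strings, first bit first\<close>
type_synonym seq = "nat \<Rightarrow> bool"

text \<open>Bijective coding of finite binary strings by naturals.\<close>
fun code_str :: "str \<Rightarrow> nat" where
  "code_str [] = 0"
| "code_str (b # s) = 2 * code_str s + (if b then 2 else 1)"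

definition rat_of_code :: "nat \<Rightarrow> real" where
  "rat_of_code n = of_int (int_decode (fst (prod_decode n))) / real (snd (prod_decode n) + 1)"

definition ce_str_set :: "str set \<Rightarrow> bool" where
  "ce_str_set S \<longleftrightarrow> ce_nat (code_str ` S)"

definition ce_str_pairs :: "(str \<times> str) set \<Rightarrow> bool" where
  "ce_str_pairs S \<longleftrightarrow> ce_nat ((\<lambda>(s, t). prod_encode (code_str s, code_str t)) ` S)"

definition unif_ce :: "(nat \<Rightarrow> str set) \<Rightarrow> bool" where
  "unif_ce U \<longleftrightarrow> ce_nat {prod_encode (i, code_str s) | i s. s \<in> U i}"

definition sprefix :: "str \<Rightarrow> seq \<Rightarrow> bool" where
  "sprefix s X \<longleftrightarrow> (\<forall>i < length s. s ! i = X i)"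

definition cyl :: "str set \<Rightarrow> seq set" where
  "cyl S = {X. \<exists>s\<in>S. sprefix s X}"

definition unif :: "seq measure" where
  "unif = (\<Pi>\<^sub>M i\<in>(UNIV::nat set). measure_pmf (bernoulli_pmf (1/2)))"

definition W2R :: "seq set" where
  "W2R = {X. \<forall>U. unif_ce U \<and> ((\<lambda>i. measure unif (cyl (U i))) \<longlonglongrightarrow> 0)
                 \<longrightarrow> X \<notin> (\<Inter>i. cyl (U i))}"

definition semimeasure :: "(str \<Rightarrow> real) \<Rightarrow> bool" where
  "semimeasure \<rho> \<longleftrightarrow> (\<forall>s. 0 \<le> \<rho> s \<and> \<rho> s \<le> 1) \<and> \<rho> [] = 1 \<and>
      (\<forall>s. \<rho> s \<ge> \<rho> (s @ [False]) + \<rho> (s @ [True]))"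

definition left_ce :: "(str \<Rightarrow> real) \<Rightarrow> bool" where
  "left_ce \<rho> \<longleftrightarrow> (\<exists>q. prim q \<and>
     (\<forall>s. mono (\<lambda>n. rat_of_code (q (prod_encode (code_str s, n)))) \<and>
          (\<lambda>n. rat_of_code (q (prod_encode (code_str s, n)))) \<longlonglongrightarrow> \<rho> s))"

definition rho_set :: "(str \<Rightarrow> real) \<Rightarrow> str set \<Rightarrow> ennreal" where
  "rho_set \<rho> E = (\<integral>\<^sup>+ s. ennreal (\<rho> s) \<partial>count_space E)"

definition W2R_rho :: "(str \<Rightarrow> real) \<Rightarrow> seq set" where
  "W2R_rho \<rho> = {X. \<forall>U. unif_ce U \<and> ((\<lambda>i. rho_set \<rho> (U i)) \<longlonglongrightarrow> 0)
                 \<longrightarrow> X \<notin> (\<Inter>i. cyl (U i))}"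

definition turing_functional :: "(str \<times> str) set \<Rightarrow> bool" where
  "turing_functional \<Phi> \<longleftrightarrow> ce_str_pairs \<Phi> \<and>
     (\<forall>s t s' t'. (s, t) \<in> \<Phi> \<longrightarrow> (s', t') \<in> \<Phi> \<longrightarrow> prefix s s' \<longrightarrow>
        prefix t t' \<or> prefix t' t)"

text \<open>The finite outputs produced on oracle X (together with the empty string); Phi^X is the
  union of this chain of strings.\<close>
definition outs :: "(str \<times> str) set \<Rightarrow> seq \<Rightarrow> str set" where
  "outs \<Phi> X = insert [] {t. \<exists>s. (s, t) \<in> \<Phi> \<and> sprefix s X}"

definition out_ext :: "(str \<times> str) set \<Rightarrow> seq \<Rightarrow> str \<Rightarrow> bool" where
  "out_ext \<Phi> X s \<longleftrightarrow> (\<exists>t\<in>outs \<Phi> X. prefix s t)"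

definition dom_TF :: "(str \<times> str) set \<Rightarrow> seq set" where
  "dom_TF \<Phi> = {X. \<forall>n. \<exists>t\<in>outs \<Phi> X. n \<le> length t}"

definition apply_TF :: "(str \<times> str) set \<Rightarrow> seq \<Rightarrow> seq" where
  "apply_TF \<Phi> X = (SOME Y. \<forall>t\<in>outs \<Phi> X. sprefix t Y)"

definition lambda_Phi :: "(str \<times> str) set \<Rightarrow> str \<Rightarrow> real" where
  "lambda_Phi \<Phi> s = measure unif {X. out_ext \<Phi> X s}"

end

theory Submission
  imports Defs
begin


lemma prim_const: "prim (\<lambda>_. c)"
proof (induct c)
  case 0 show ?case by (rule prim_zero)
next
  case (Suc c) from prim_comp[OF prim_suc Suc] show ?case by simp
qed

lemma prim_fstc: "prim f \<Longrightarrow> prim (\<lambda>x. fst (prod_decode (f x)))"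
  using prim_comp[OF prim_fst] by blast
lemma prim_sndc: "prim f \<Longrightarrow> prim (\<lambda>x. snd (prod_decode (f x)))"
  using prim_comp[OF prim_snd] by blast

lemma prim2_app:
  assumes "prim (\<lambda>p. F (fst (prod_decode p)) (snd (prod_decode p)))" "prim f" "prim g"
  shows "prim (\<lambda>x. F (f x) (g x))"
  using prim_comp[OF assms(1) prim_pair[OF assms(2,3)]] by simp

lemma add2: "prim (\<lambda>p. fst (prod_decode p) + snd (prod_decode p))"
proof -
  have h: "prim (\<lambda>q. Suc (snd (prod_decode (snd (prod_decode q)))))"
    by (rule prim_comp[OF prim_suc], rule prim_sndc, rule prim_snd)
  have eq: "\<And>x y. rec_nat x (\<lambda>k r. Suc r) y = x + y" by (induct_tac y) auto
  show ?thesis using prim_rec[OF prim_id h] by (simp add: eq)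
qed

lemma prim_addc: "prim f \<Longrightarrow> prim g \<Longrightarrow> prim (\<lambda>x. f x + g x)"
  by (rule prim2_app[OF add2])

lemma prim_pred: "prim (\<lambda>y. y - 1)"
proof -
  have h: "prim (\<lambda>q. fst (prod_decode (snd (prod_decode q))))"
    by (rule prim_fstc, rule prim_snd)
  have eq: "\<And>y. rec_nat 0 (\<lambda>k r. k) y = y - 1" by (induct_tac y) auto
  have "prim (\<lambda>p. snd (prod_decode p) - 1)" using prim_rec[OF prim_zero h] by (simp add: eq)
  from prim_comp[OF this prim_pair[OF prim_zero prim_id]] show ?thesis by simp
qed

lemma sub2: "prim (\<lambda>p. fst (prod_decode p) - snd (prod_decode p))"
proof -
  have h: "prim (\<lambda>q. snd (prod_decode (snd (prod_decode q))) - 1)"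
    by (rule prim_comp[OF prim_pred], rule prim_sndc, rule prim_snd)
  have eq: "\<And>x y. rec_nat x (\<lambda>k r. r - Suc 0) y = x - y" by (induct_tac y) auto
  show ?thesis using prim_rec[OF prim_id h] by (simp add: eq)
qed

lemma prim_subc: "prim f \<Longrightarrow> prim g \<Longrightarrow> prim (\<lambda>x. f x - g x)"
  by (rule prim2_app[OF sub2])

lemma mult2: "prim (\<lambda>p. fst (prod_decode p) * snd (prod_decode p))"
proof -
  have h: "prim (\<lambda>q. snd (prod_decode (snd (prod_decode q))) + fst (prod_decode q))"
    by (intro prim_addc prim_sndc prim_snd prim_fst)
  have eq: "\<And>x y. rec_nat 0 (\<lambda>k r. r + x) y = x * y" by (induct_tac y) auto
  show ?thesis using prim_rec[OF prim_zero h] by (simp add: eq)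
qed

lemma prim_multc: "prim f \<Longrightarrow> prim g \<Longrightarrow> prim (\<lambda>x. f x * g x)"
  by (rule prim2_app[OF mult2])

lemma prim_pow2: "prim (\<lambda>y. 2 ^ y)"
proof -
  have h: "prim (\<lambda>q. snd (prod_decode (snd (prod_decode q))) + snd (prod_decode (snd (prod_decode q))))"
    by (intro prim_addc prim_sndc prim_snd)
  have eq: "\<And>y. rec_nat (Suc 0) (\<lambda>k r. r + r) y = (2::nat) ^ y" by (induct_tac y) auto
  have "prim (\<lambda>p. 2 ^ snd (prod_decode p))" using prim_rec[OF prim_const[of 1] h] by (simp add: eq)
  from prim_comp[OF this prim_pair[OF prim_zero prim_id]] show ?thesis by simp
qed

lemma prim_pow2c: "prim f \<Longrightarrow> prim (\<lambda>x. 2 ^ f x)"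
  using prim_comp[OF prim_pow2] by blast


lemma code_str_bounds: "2 ^ length s \<le> code_str s + 1 \<and> code_str s + 2 \<le> 2 ^ Suc (length s)"
  by (induct s) auto

lemma code_str_append: "code_str (s @ r) = code_str s + 2 ^ length s * code_str r"
  by (induct s) (auto simp: algebra_simps)

lemma code_str_inj: "code_str s = code_str t \<Longrightarrow> s = t"
proof (induct s arbitrary: t)
  case Nil then show ?case by (cases t) (auto split: if_splits)
next
  case (Cons b s)
  then show ?case by (cases t; auto split: if_splits; presburger)
qed

lemma code_str_surj: "\<exists>s. code_str s = n"
proof (induct n rule: less_induct)
  case (less n)
  show ?case
  proof (cases "n = 0")
    case True then show ?thesis by (intro exI[of _ "[]"]) auto
  next
    case False
    show ?thesis
    proof (cases "even n")
      case True
      have "n = 2 * (n div 2 - 1) + 2" using True False by presburger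
      then obtain m where m: "n = 2 * m + 2" by blast
      then obtain s where "code_str s = m" using less by fastforce
      then show ?thesis using m by (intro exI[of _ "True # s"]) auto
    next
      case odd: False
      have "n = 2 * (n div 2) + 1" using odd by presburger
      then obtain m where m: "n = 2 * m + 1" by blast
      then obtain s where "code_str s = m" using less by fastforce
      then show ?thesis using m by (intro exI[of _ "False # s"]) auto
    qed
  qed
qed

lemma len_unique:
  assumes "2 ^ L \<le> c + 1" "c + 2 \<le> 2 ^ L + (2::nat) ^ L"
    "2 ^ l \<le> c + 1" "c + 2 \<le> (2::nat) ^ Suc l"
  shows "L = l"
proof -
  have "(2::nat) ^ L < 2 ^ Suc l" using assms by linarith
  hence "L < Suc l" by (rule power_less_imp_less_exp[rotated]) simp
  moreover have "(2::nat) ^ l < 2 ^ Suc L" using assms by simp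
  hence "l < Suc L" by (rule power_less_imp_less_exp[rotated]) simp
  ultimately show ?thesis by simp
qed

lemma ce_W:
  assumes U: "unif_ce U" and P: "ce_str_pairs \<Phi>"
  shows "unif_ce (\<lambda>i. {s. \<exists>t \<sigma>. (s,t)\<in>\<Phi> \<and> \<sigma> \<in> U i \<and> prefix \<sigma> t})"
proof -
  obtain R2 where R2: "prim R2" and R2e: "{prod_encode (i, code_str s) | i s. s \<in> U i} = {x. \<exists>n. R2 (prod_encode (x, n)) \<noteq> 0}"
    using U unfolding unif_ce_def ce_nat_def by blast
  obtain R1 where R1: "prim R1" and R1e: "(\<lambda>(s, t). prod_encode (code_str s, code_str t)) ` \<Phi> = {x. \<exists>n. R1 (prod_encode (x, n)) \<noteq> 0}"
    using P unfolding ce_str_pairs_def ce_nat_def by blast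
  let ?x = "\<lambda>p. fst (prod_decode p)"
  let ?n = "\<lambda>p. snd (prod_decode p)"
  let ?i = "\<lambda>p. fst (prod_decode (?x p))"
  let ?a = "\<lambda>p. snd (prod_decode (?x p))"
  let ?ct = "\<lambda>p. fst (prod_decode (?n p))"
  let ?n1 = "\<lambda>p. snd (prod_decode (?n p))"
  let ?cs = "\<lambda>p. fst (prod_decode (?n1 p))"
  let ?n2 = "\<lambda>p. snd (prod_decode (?n1 p))"
  let ?m1 = "\<lambda>p. fst (prod_decode (?n2 p))"
  let ?n3 = "\<lambda>p. snd (prod_decode (?n2 p))"
  let ?m2 = "\<lambda>p. fst (prod_decode (?n3 p))"
  let ?n4 = "\<lambda>p. snd (prod_decode (?n3 p))"
  let ?r = "\<lambda>p. fst (prod_decode (?n4 p))"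
  let ?L = "\<lambda>p. snd (prod_decode (?n4 p))"
  define R where "R = (\<lambda>p. R1 (prod_encode (prod_encode (?a p, ?ct p), ?m1 p))
     * R2 (prod_encode (prod_encode (?i p, ?cs p), ?m2 p))
     * (1 - ((?ct p - (?cs p + 2 ^ ?L p * ?r p)) + ((?cs p + 2 ^ ?L p * ?r p) - ?ct p)))
     * (1 - (2 ^ ?L p - (?cs p + 1))) * (1 - ((?cs p + 2) - (2 ^ ?L p + 2 ^ ?L p))))"
  have primR: "prim R" unfolding R_def
    by (intro prim_multc prim_comp[OF R1] prim_comp[OF R2] prim_subc prim_addc prim_pow2c
          prim_const prim_pair prim_fstc prim_sndc prim_id)
  have Rnz: "R (prod_encode (prod_encode (i, a), prod_encode (ct, prod_encode (cs, prod_encode (m1, prod_encode (m2, prod_encode (r, L))))))) \<noteq> 0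
     \<longleftrightarrow> R1 (prod_encode (prod_encode (a, ct), m1)) \<noteq> 0 \<and> R2 (prod_encode (prod_encode (i, cs), m2)) \<noteq> 0
        \<and> ct = cs + 2 ^ L * r \<and> 2 ^ L \<le> cs + 1 \<and> cs + 2 \<le> 2 ^ L + 2 ^ L" for i a ct cs m1 m2 r L
    unfolding R_def by auto
  let ?W = "\<lambda>i. {s. \<exists>t \<sigma>. (s,t)\<in>\<Phi> \<and> \<sigma> \<in> U i \<and> prefix \<sigma> t}"
  have "{prod_encode (i, code_str s) | i s. s \<in> ?W i} = {x. \<exists>n. R (prod_encode (x, n)) \<noteq> 0}"
  proof (intro set_eqI iffI)
    fix x assume "x \<in> {prod_encode (i, code_str s) | i s. s \<in> ?W i}"
    then obtain i s t \<sigma> where x: "x = prod_encode (i, code_str s)" and st: "(s,t)\<in>\<Phi>" and su: "\<sigma> \<in> U i"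
      and pr: "prefix \<sigma> t" by blast
    obtain r where tr: "t = \<sigma> @ r" using pr prefix_def by blast
    have "prod_encode (code_str s, code_str t) \<in> {x. \<exists>n. R1 (prod_encode (x, n)) \<noteq> 0}"
      using st R1e[symmetric] by force
    then obtain m1 where m1: "R1 (prod_encode (prod_encode (code_str s, code_str t), m1)) \<noteq> 0" by blast
    have "prod_encode (i, code_str \<sigma>) \<in> {x. \<exists>n. R2 (prod_encode (x, n)) \<noteq> 0}"
      using su R2e[symmetric] by force
    then obtain m2 where m2: "R2 (prod_encode (prod_encode (i, code_str \<sigma>), m2)) \<noteq> 0" by blast
    have "R (prod_encode (prod_encode (i, code_str s), prod_encode (code_str t, prod_encode (code_str \<sigma>, prod_encode (m1, prod_encode (m2, prod_encode (code_str r, length \<sigma>))))))) \<noteq> 0"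
      unfolding Rnz using m1 m2 code_str_bounds[of \<sigma>] tr code_str_append by auto
    then show "x \<in> {x. \<exists>n. R (prod_encode (x, n)) \<noteq> 0}" using x by blast
  next
    fix x assume "x \<in> {x. \<exists>n. R (prod_encode (x, n)) \<noteq> 0}"
    then obtain n where n: "R (prod_encode (x, n)) \<noteq> 0" by blast
    obtain i a where x: "x = prod_encode (i, a)" by (metis prod_decode_inverse surj_pair)
    obtain ct n1 where n1: "n = prod_encode (ct, n1)" by (metis prod_decode_inverse surj_pair)
    obtain cs n2 where n2: "n1 = prod_encode (cs, n2)" by (metis prod_decode_inverse surj_pair)
    obtain m1 n3 where n3: "n2 = prod_encode (m1, n3)" by (metis prod_decode_inverse surj_pair)
    obtain m2 n4 where n4: "n3 = prod_encode (m2, n4)" by (metis prod_decode_inverse surj_pair)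
    obtain r L where n5: "n4 = prod_encode (r, L)" by (metis prod_decode_inverse surj_pair)
    obtain s where s: "code_str s = a" using code_str_surj by blast
    obtain t where t: "code_str t = ct" using code_str_surj by blast
    obtain \<sigma> where sg: "code_str \<sigma> = cs" using code_str_surj by blast
    obtain r' where r': "code_str r' = r" using code_str_surj by blast
    from n[unfolded x n1 n2 n3 n4 n5 Rnz] have
      h1: "R1 (prod_encode (prod_encode (a, ct), m1)) \<noteq> 0" and h2: "R2 (prod_encode (prod_encode (i, cs), m2)) \<noteq> 0"
      and h3: "ct = cs + 2 ^ L * r" and h4: "2 ^ L \<le> cs + 1" and h5: "cs + 2 \<le> 2 ^ L + 2 ^ L" by auto
    have "prod_encode (a, ct) \<in> (\<lambda>(s, t). prod_encode (code_str s, code_str t)) ` \<Phi>" using h1 R1e by blast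
    then obtain s' t' where "(s',t') \<in> \<Phi>" "code_str s' = a" "code_str t' = ct" by auto
    hence st: "(s,t) \<in> \<Phi>" using s t code_str_inj by metis
    have "prod_encode (i, cs) \<in> {prod_encode (i, code_str s) | i s. s \<in> U i}" using h2 R2e by blast
    then obtain \<sigma>' where "\<sigma>' \<in> U i" "code_str \<sigma>' = cs" by auto
    hence su: "\<sigma> \<in> U i" using sg code_str_inj by metis
    have "L = length \<sigma>" using len_unique[OF h4 h5] code_str_bounds[of \<sigma>] sg by blast
    hence "code_str t = code_str (\<sigma> @ r')" using h3 t sg r' code_str_append by simp
    hence "t = \<sigma> @ r'" by (rule code_str_inj)
    hence "prefix \<sigma> t" by simp
    then show "x \<in> {prod_encode (i, code_str s) | i s. s \<in> ?W i}" using x s st su by blast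
  qed
  then show ?thesis unfolding unif_ce_def ce_nat_def using primR by blast
qed



lemma space_unif: "space unif = UNIV"
  unfolding unif_def by (simp add: space_PiM PiE_def Pi_def extensional_def)

lemma ps_unif: "prob_space unif"
  unfolding unif_def by (intro prob_space_PiM) (simp add: prob_space_measure_pmf)

lemma sprefix_sets: "{X. sprefix s X} \<in> sets unif"
proof -
  have "Measurable.pred unif (\<lambda>X. \<forall>i\<in>{..<length s}. s ! i = X i)"
    unfolding unif_def by measurable
  moreover have "{X. \<forall>i<length s. s ! i = X i} = {x. \<forall>i\<in>{..<length s}. s ! i = x i}" by auto
  ultimately show ?thesis unfolding sprefix_def pred_def space_unif by simp
qed

lemma cyl_sets: "cyl S \<in> sets unif"
proof -
  have "cyl S = (\<Union>s\<in>S. {X. sprefix s X})" unfolding cyl_def by auto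
  also have "\<dots> \<in> sets unif"
    by (rule sets.countable_UN') (auto simp: countableI_type sprefix_sets)
  finally show ?thesis .
qed

lemma subadd_countable:
  assumes I: "countable I" and A: "\<And>i. i \<in> I \<Longrightarrow> A i \<in> sets M"
  shows "emeasure M (\<Union>(A ` I)) \<le> (\<integral>\<^sup>+i. emeasure M (A i) \<partial>count_space I)"
proof -
  have U: "\<Union>(A ` I) \<in> sets M" using sets.countable_UN'[OF I] A by blast
  have ptw: "indicator (\<Union>(A ` I)) x \<le> (\<integral>\<^sup>+ i. indicator (A i) x \<partial>count_space I)" for x
  proof (cases "x \<in> \<Union>(A ` I)")
    case True
    then obtain j where j: "j \<in> I" "x \<in> A j" by auto
    have "(1::ennreal) = (\<integral>\<^sup>+ i. indicator {j} i \<partial>count_space I)" using j by simp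
    also have "\<dots> \<le> (\<integral>\<^sup>+ i. indicator (A i) x \<partial>count_space I)"
      by (intro nn_integral_mono) (auto simp: j split: split_indicator)
    finally show ?thesis using True by simp
  qed simp
  have "emeasure M (\<Union>(A ` I)) = (\<integral>\<^sup>+x. indicator (\<Union>(A ` I)) x \<partial>M)" using U by simp
  also have "\<dots> \<le> (\<integral>\<^sup>+x. \<integral>\<^sup>+ i. indicator (A i) x \<partial>count_space I \<partial>M)"
    by (intro nn_integral_mono ptw)
  also have "\<dots> = (\<integral>\<^sup>+i. \<integral>\<^sup>+x. indicator (A i) x \<partial>M \<partial>count_space I)"
    using A by (intro nn_integral_count_space_nn_integral I) auto
  also have "\<dots> = (\<integral>\<^sup>+i. emeasure M (A i) \<partial>count_space I)"
    using A by (intro nn_integral_cong) auto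
  finally show ?thesis .
qed



lemma sprefix_prefix:
  assumes "sprefix a Y" "sprefix b Y" "length a \<le> length b" shows "prefix a b"
proof -
  have "a = take (length a) b"
    using assms unfolding sprefix_def by (intro nth_equalityI) auto
  then show ?thesis by (metis take_is_prefix)
qed

lemma comp_nth: "prefix a b \<or> prefix b a \<Longrightarrow> i < length a \<Longrightarrow> i < length b \<Longrightarrow> a ! i = b ! i"
  by (auto simp: prefix_def nth_append)

lemma outs_chain:
  assumes TF: "turing_functional \<Phi>" and t: "t \<in> outs \<Phi> X" and t': "t' \<in> outs \<Phi> X"
  shows "prefix t t' \<or> prefix t' t"
proof -
  { assume "t \<noteq> []" "t' \<noteq> []"
    then obtain s s' where ss: "(s,t) \<in> \<Phi>" "sprefix s X" "(s',t') \<in> \<Phi>" "sprefix s' X"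
      using t t' unfolding outs_def by auto
    have "prefix s s' \<or> prefix s' s"
      using sprefix_prefix[OF ss(2) ss(4)] sprefix_prefix[OF ss(4) ss(2)] by linarith
    then have ?thesis using TF ss unfolding turing_functional_def by blast }
  then show ?thesis by (cases "t = []"; cases "t' = []") auto
qed

lemma apply_TF_prefix:
  assumes TF: "turing_functional \<Phi>" and D: "X \<in> dom_TF \<Phi>" and t: "t \<in> outs \<Phi> X"
  shows "sprefix t (apply_TF \<Phi> X)"
proof -
  define T where "T i = (SOME t. t \<in> outs \<Phi> X \<and> i < length t)" for i
  have T: "T i \<in> outs \<Phi> X \<and> i < length (T i)" for i
  proof -
    obtain t where "t \<in> outs \<Phi> X" "Suc i \<le> length t" using D unfolding dom_TF_def by blast
    then have "t \<in> outs \<Phi> X \<and> i < length t" by simp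
    then show ?thesis unfolding T_def by (rule someI)
  qed
  define Y0 where "Y0 i = T i ! i" for i
  have "\<forall>t\<in>outs \<Phi> X. sprefix t Y0"
    unfolding sprefix_def Y0_def using T outs_chain[OF TF] comp_nth by blast
  then have "\<forall>t\<in>outs \<Phi> X. sprefix t (apply_TF \<Phi> X)"
    unfolding apply_TF_def by (rule someI[where P="\<lambda>Y. \<forall>t\<in>outs \<Phi> X. sprefix t Y"])
  then show ?thesis using t by blast
qed

theorem theorem5p9:
  fixes \<rho> :: "str \<Rightarrow> real" and \<Phi> :: "(str \<times> str) set"
  assumes "semimeasure \<rho>" and "left_ce \<rho>"
    and "turing_functional \<Phi>"
    and "\<forall>s. lambda_Phi \<Phi> s = \<rho> s"
  shows "\<forall>X \<in> W2R \<inter> dom_TF \<Phi>. apply_TF \<Phi> X \<in> W2R_rho \<rho>"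
proof
  fix X assume XW: "X \<in> W2R \<inter> dom_TF \<Phi>"
  have TF: "turing_functional \<Phi>" by fact
  interpret P: prob_space unif by (rule ps_unif)
  show "apply_TF \<Phi> X \<in> W2R_rho \<rho>"
    unfolding W2R_rho_def
  proof (intro CollectI allI impI notI)
    fix U assume A: "unif_ce U \<and> ((\<lambda>i. rho_set \<rho> (U i)) \<longlonglongrightarrow> 0)"
      and Y: "apply_TF \<Phi> X \<in> (\<Inter>i. cyl (U i))"
    define W where "W i = {s. \<exists>t \<sigma>. (s,t)\<in>\<Phi> \<and> \<sigma> \<in> U i \<and> prefix \<sigma> t}" for i
    have ceW: "unif_ce W" unfolding W_def
      using ce_W A TF unfolding turing_functional_def by blast
    define E where "E \<sigma> = {Z. out_ext \<Phi> Z \<sigma>}" for \<sigma>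
    have E_eq: "E \<sigma> = (if \<sigma> = [] then UNIV else cyl {s. \<exists>t. (s,t)\<in>\<Phi> \<and> prefix \<sigma> t})" for \<sigma>
      unfolding E_def out_ext_def outs_def cyl_def by auto
    have E_sets: "E \<sigma> \<in> sets unif" for \<sigma>
    proof (cases "\<sigma> = []")
      case True then show ?thesis using E_eq[of \<sigma>] sets.top[of unif] space_unif by simp
    next
      case False then show ?thesis using E_eq[of \<sigma>] cyl_sets by simp
    qed
    have Em: "emeasure unif (E \<sigma>) = ennreal (\<rho> \<sigma>)" for \<sigma>
      using assms(4) P.emeasure_eq_measure unfolding lambda_Phi_def E_def by simp
    have bound: "ennreal (measure unif (cyl (W i))) \<le> rho_set \<rho> (U i)" for i
    proof -
      have sub: "cyl (W i) \<subseteq> (\<Union>\<sigma>\<in>U i. E \<sigma>)"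
        unfolding cyl_def W_def E_def out_ext_def outs_def by blast
      have "ennreal (measure unif (cyl (W i))) = emeasure unif (cyl (W i))"
        by (simp add: P.emeasure_eq_measure)
      also have "\<dots> \<le> emeasure unif (\<Union>\<sigma>\<in>U i. E \<sigma>)"
        by (intro emeasure_mono sub) (rule sets.countable_UN', auto simp: countableI_type E_sets)
      also have "\<dots> \<le> (\<integral>\<^sup>+\<sigma>. emeasure unif (E \<sigma>) \<partial>count_space (U i))"
        by (intro subadd_countable E_sets) (simp add: countableI_type)
      also have "\<dots> = rho_set \<rho> (U i)" unfolding rho_set_def Em ..
      finally show ?thesis .
    qed
    have ev1: "eventually (\<lambda>i. (0::ennreal) \<le> ennreal (measure unif (cyl (W i)))) sequentially" by simp
    have ev2: "eventually (\<lambda>i. ennreal (measure unif (cyl (W i))) \<le> rho_set \<rho> (U i)) sequentially"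
      using bound by simp
    have lim: "(\<lambda>i. rho_set \<rho> (U i)) \<longlonglongrightarrow> 0" using A by blast
    have "(\<lambda>i. ennreal (measure unif (cyl (W i)))) \<longlonglongrightarrow> 0"
      by (rule tendsto_sandwich[OF ev1 ev2 tendsto_const lim])
    then have "(\<lambda>i. ennreal (measure unif (cyl (W i)))) \<longlonglongrightarrow> ennreal 0" by simp
    then have "(\<lambda>i. measure unif (cyl (W i))) \<longlonglongrightarrow> 0"
      by (subst (asm) tendsto_ennreal_iff) auto
    then have notin: "X \<notin> (\<Inter>i. cyl (W i))" using XW ceW unfolding W2R_def by blast
    have "X \<in> cyl (W i)" for i
    proof -
      obtain \<sigma> where s: "\<sigma> \<in> U i" "sprefix \<sigma> (apply_TF \<Phi> X)" using Y unfolding cyl_def by blast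
      obtain t where t: "t \<in> outs \<Phi> X" "Suc (length \<sigma>) \<le> length t"
        using XW unfolding dom_TF_def by blast
      then obtain s where st: "(s,t) \<in> \<Phi>" "sprefix s X" unfolding outs_def by auto
      have "prefix \<sigma> t"
        using sprefix_prefix[OF s(2) apply_TF_prefix[OF TF _ t(1)]] XW t(2) by auto
      then show ?thesis unfolding cyl_def W_def using st s by blast
    qed
    then show False using notin by blast
  qed
qed

end
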